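(* Every oriented graph without transmitters has at least three weak kings.
   Context: An oriented graph is a digraph with no loops and no pair of symmetric arcs. A transmitter is a vertex of indegree $0$. For vertices $u,v$ write $u(1\text{-}0)v$ if there is an arc from $u$ to $v$, and $u(0\text{-}0)v$ if there is no arc between $u$ and $v$. A vertex $v$ is weakly reachable within two steps from $u$ if $u(1\text{-}0)v$, or $u(0\text{-}0)v$, or for some vertex $w$ one has $u(1\text{-}0)w(1\text{-}0)v$, or $u(1\text{-}0)w(0\text{-}0)v$, or $u(0\text{-}0)w(1\text{-}0)v$. A vertex $u$ of an oriented graph $D$ is a weak king if every other vertex of $D$ is weakly reachable within two steps from $u$. *)

theory Defs
  imports Main
begin

definition oriented_graph :: "'a set \<Rightarrow> ('a \<times> 'a) set \<Rightarrow> bool" where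
  "oriented_graph V A \<longleftrightarrow> finite V \<and> V \<noteq> {} \<and> A \<subseteq> V \<times> V
     \<and> (\<forall>v. (v, v) \<notin> A) \<and> (\<forall>u v. (u, v) \<in> A \<longrightarrow> (v, u) \<notin> A)"

definition indegree :: "'a set \<Rightarrow> ('a \<times> 'a) set \<Rightarrow> 'a \<Rightarrow> nat" where
  "indegree V A v = card {u \<in> V. (u, v) \<in> A}"

definition transmitter :: "'a set \<Rightarrow> ('a \<times> 'a) set \<Rightarrow> 'a \<Rightarrow> bool" where
  "transmitter V A v \<longleftrightarrow> v \<in> V \<and> indegree V A v = 0"

definition arc10 :: "('a \<times> 'a) set \<Rightarrow> 'a \<Rightarrow> 'a \<Rightarrow> bool" where
  "arc10 A u v \<longleftrightarrow> (u, v) \<in> A"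

definition arc00 :: "('a \<times> 'a) set \<Rightarrow> 'a \<Rightarrow> 'a \<Rightarrow> bool" where
  "arc00 A u v \<longleftrightarrow> (u, v) \<notin> A \<and> (v, u) \<notin> A"

definition weakly_reachable2 :: "'a set \<Rightarrow> ('a \<times> 'a) set \<Rightarrow> 'a \<Rightarrow> 'a \<Rightarrow> bool" where
  "weakly_reachable2 V A u v \<longleftrightarrow>
     arc10 A u v \<or> arc00 A u v \<or>
     (\<exists>w\<in>V. (arc10 A u w \<and> arc10 A w v) \<or> (arc10 A u w \<and> arc00 A w v)
            \<or> (arc00 A u w \<and> arc10 A w v))"

definition weak_king :: "'a set \<Rightarrow> ('a \<times> 'a) set \<Rightarrow> 'a \<Rightarrow> bool" where
  "weak_king V A u \<longleftrightarrow> u \<in> V \<and> (\<forall>v\<in>V. v \<noteq> u \<longrightarrow> weakly_reachable2 V A u v)"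

end

theory Submission
  imports Defs
begin

definition indegS :: "('a \<times> 'a) set \<Rightarrow> 'a set \<Rightarrow> 'a \<Rightarrow> nat" where
  "indegS A S x = card {w \<in> S. (w, x) \<in> A}"

lemma key:
  assumes og: "oriented_graph V A" and SV: "S \<subseteq> V" and xS: "x \<in> S"
    and mn: "\<forall>y\<in>S. indegS A S x \<le> indegS A S y"
    and cl: "\<forall>v\<in>V. (v, x) \<in> A \<and> (\<forall>y. (x, y) \<in> A \<longrightarrow> (v, y) \<in> A) \<longrightarrow> v \<in> S"
  shows "weak_king V A x"
proof -
  have fin: "finite V" and AV: "A \<subseteq> V \<times> V" and nl: "\<And>v. (v, v) \<notin> A"
    and as: "\<And>u v. (u, v) \<in> A \<Longrightarrow> (v, u) \<notin> A"
    using og unfolding oriented_graph_def by auto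
  have xV: "x \<in> V" using SV xS by auto
  show ?thesis unfolding weak_king_def
  proof (intro conjI ballI impI xV)
    fix v assume vV: "v \<in> V" and vx: "v \<noteq> x"
    show "weakly_reachable2 V A x v"
    proof (rule ccontr)
      assume nr: "\<not> weakly_reachable2 V A x v"
      have nxv: "(x, v) \<notin> A" using nr unfolding weakly_reachable2_def arc10_def by auto
      have vxA: "(v, x) \<in> A" using nr unfolding weakly_reachable2_def arc10_def arc00_def by auto
      have out: "(v, y) \<in> A" if "(x, y) \<in> A" for y
      proof -
        have yV: "y \<in> V" using that AV by auto
        have "y \<noteq> v" using that nxv by auto
        then show ?thesis using nr yV that unfolding weakly_reachable2_def arc10_def arc00_def by blast
      qed
      have vS: "v \<in> S" using cl vV vxA out by blast
      have sub: "{w \<in> S. (w, v) \<in> A} \<subseteq> {w \<in> S. (w, x) \<in> A}"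
      proof
        fix w assume w: "w \<in> {w \<in> S. (w, v) \<in> A}"
        then have wV: "w \<in> V" and wv: "(w, v) \<in> A" and wS: "w \<in> S" using SV by auto
        have "(x, w) \<notin> A" using out wv as by blast
        moreover have "\<not> arc00 A x w" using nr wV wv unfolding weakly_reachable2_def arc10_def by blast
        ultimately have "(w, x) \<in> A" unfolding arc00_def by blast
        then show "w \<in> {w \<in> S. (w, x) \<in> A}" using wS by auto
      qed
      have "v \<in> {w \<in> S. (w, x) \<in> A}" using vS vxA by auto
      moreover have "v \<notin> {w \<in> S. (w, v) \<in> A}" using nl by auto
      ultimately have psub: "{w \<in> S. (w, v) \<in> A} \<subset> {w \<in> S. (w, x) \<in> A}" using sub by blast
      have "finite {w \<in> S. (w, x) \<in> A}" using fin SV by (auto intro: finite_subset)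
      then have "indegS A S v < indegS A S x" unfolding indegS_def using psub psubset_card_mono by blast
      then show False using mn vS by force
    qed
  qed
qed

lemma has_in:
  assumes og: "oriented_graph V A" and nt: "\<forall>v\<in>V. \<not> transmitter V A v" and vV: "v \<in> V"
  shows "\<exists>u\<in>V. (u, v) \<in> A"
proof -
  have "finite V" using og unfolding oriented_graph_def by auto
  moreover have "indegree V A v \<noteq> 0" using nt vV unfolding transmitter_def by auto
  ultimately show ?thesis unfolding indegree_def by (auto simp: card_eq_0_iff)
qed

lemma minex:
  assumes "x \<in> S" shows "\<exists>y\<in>S. \<forall>z\<in>S. (f y :: nat) \<le> f z"
  using ex_has_least_nat[of "\<lambda>y. y \<in> S" x f] assms by blast

lemma step:
  assumes og: "oriented_graph V A" and nt: "\<forall>v\<in>V. \<not> transmitter V A v" and uV: "u \<in> V"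
  shows "\<exists>x\<in>V. (x, u) \<in> A \<and> weak_king V A x"
proof -
  define S where "S = {w \<in> V. (w, u) \<in> A}"
  obtain w where "w \<in> S" using has_in[OF og nt uV] S_def by auto
  then obtain x where xS: "x \<in> S" and mn: "\<forall>y\<in>S. indegS A S x \<le> indegS A S y"
    using minex[of w S "indegS A S"] by auto
  have "weak_king V A x"
  proof (rule key[OF og _ xS mn])
    show "S \<subseteq> V" using S_def by auto
    show "\<forall>v\<in>V. (v, x) \<in> A \<and> (\<forall>y. (x, y) \<in> A \<longrightarrow> (v, y) \<in> A) \<longrightarrow> v \<in> S"
      using xS S_def by auto
  qed
  then show ?thesis using xS S_def by auto
qed

theorem theorem6:
  fixes V :: "'a set" and A :: "('a \<times> 'a) set"
  assumes "oriented_graph V A"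
    and "\<forall>v\<in>V. \<not> transmitter V A v"
  shows "card {u \<in> V. weak_king V A u} \<ge> 3"
proof -
  have fin: "finite V" and ne: "V \<noteq> {}" and as: "\<And>u v. (u, v) \<in> A \<Longrightarrow> (v, u) \<notin> A"
    and nl: "\<And>v. (v, v) \<notin> A"
    using assms(1) unfolding oriented_graph_def by auto
  obtain x1 where x1: "weak_king V A x1" using step[OF assms] ne by blast
  then have x1V: "x1 \<in> V" unfolding weak_king_def by auto
  obtain x2 where x2: "x2 \<in> V" "(x2, x1) \<in> A" "weak_king V A x2" using step[OF assms x1V] by blast
  obtain x3 where x3: "x3 \<in> V" "(x3, x2) \<in> A" "weak_king V A x3" using step[OF assms x2(1)] by blast
  have d: "x1 \<noteq> x2" "x2 \<noteq> x3" "x1 \<noteq> x3" using x2 x3 as nl by metis+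
  have "{x1, x2, x3} \<subseteq> {u \<in> V. weak_king V A u}" using x1 x1V x2 x3 by auto
  moreover have "finite {u \<in> V. weak_king V A u}" using fin by auto
  ultimately have "card {x1, x2, x3} \<le> card {u \<in> V. weak_king V A u}" by (rule card_mono[rotated])
  moreover have "card {x1, x2, x3} = 3" using d by auto
  ultimately show ?thesis by simp
qed

end
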